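(* Let $V:\mathbb R\to\mathbb R$ be smooth and $\alpha_{11},\alpha_{13},\alpha_{33},\beta\in\mathbb R$. Let $u_h,v_h,w_h$ be continuously differentiable in $t$ with values in $V_h$ and satisfy, for every $j$ and all $\varphi_1,\varphi_2,\varphi_3\in V_h$, $$-\int_{I_j}\partial_tv_h\varphi_1dx-\int_{I_j}w_h\partial_x\varphi_1dx+(\widehat{w_h}\varphi_1^-)_{j+\frac12}-(\widehat{w_h}\varphi_1^+)_{j-\frac12}=-\int_{I_j}V'(u_h)\varphi_1dx,$$ $$\int_{I_j}\partial_tu_h\varphi_2dx+(\widehat{v_h}\varphi_2^-)_{j+\frac12}-(\widehat{v_h}\varphi_2^+)_{j-\frac12}=\int_{I_j}v_h\varphi_2dx,$$ $$\int_{I_j}u_h\partial_x\varphi_3dx-(\widehat{u_h}\varphi_3^-)_{j+\frac12}+(\widehat{u_h}\varphi_3^+)_{j-\frac12}=-\int_{I_j}w_h\varphi_3dx,$$ with interface fluxes $\widehat{w_h}=\{w_h\}+\alpha_{11}[u_h]+\alpha_{13}[w_h]-\beta\,\partial_t[v_h]$, $\widehat{v_h}=\beta\,\partial_t[u_h]$, $\widehat{u_h}=\{u_h\}-\alpha_{13}[u_h]-\alpha_{33}[w_h]$. Then the discrete energy $$\mathcal E_h=\int_\Omega\Big(\tfrac12(v_h^2+w_h^2)-V(u_h)\Big)dx+\tfrac12\sum_j\big(\alpha_{11}[u_h]^2-\alpha_{33}[w_h]^2\big)_{j+\frac12}$$ is constant in time.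
   Context: This is a DG discretization of the Hamiltonian wave equation $u_{tt}-u_{xx}=V'(u)$, written as $-v_t+w_x=-V'(u)$, $u_t=v$, $-u_x=-w$. Mesh and spaces: a one-dimensional domain $\Omega$ is partitioned into cells $I_j=[x_{j-1/2},x_{j+1/2}]$, $j=1,\dots,N$, with periodic boundary conditions (interface indices modulo $N$). For fixed $k\ge0$, $V_h=\{v\in L^2(\Omega): v|_{I_j}\text{ is a polynomial of degree}\le k\ \forall j\}$. For $v\in V_h$, $v^\pm_{j+1/2}$ are its right/left limits at $x_{j+1/2}$, $\{v\}=\frac12(v^++v^-)$, $[v]=v^+-v^-$; subscript $j\pm\frac12$ denotes evaluation at $x_{j\pm1/2}$. *)

theory Defs
  imports "HOL-Analysis.Analysis"
begin

text \<open>Mesh: interface points xp 0 < xp 1 < ... < xp N, where xp m stands for x_{m+1/2};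
  cell I_j = [xp (j-1), xp j] for j = 1..N.  Periodicity: interface N (x_{N+1/2}) is
  identified with interface 0 (x_{1/2}).  An element of V_h is represented by its
  polynomial coefficients on each cell: c j i is the coefficient of x^i on cell j (i \<le> k).\<close>

definition cellval :: "nat \<Rightarrow> (nat \<Rightarrow> nat \<Rightarrow> real) \<Rightarrow> nat \<Rightarrow> real \<Rightarrow> real" where
  "cellval k c j x = (\<Sum>i\<le>k. c j i * x ^ i)"

definition tracem :: "nat \<Rightarrow> (nat \<Rightarrow> real) \<Rightarrow> (nat \<Rightarrow> nat \<Rightarrow> real) \<Rightarrow> nat \<Rightarrow> real" where
  "tracem k xp c m = cellval k c m (xp m)"

definition tracep :: "nat \<Rightarrow> nat \<Rightarrow> (nat \<Rightarrow> real) \<Rightarrow> (nat \<Rightarrow> nat \<Rightarrow> real) \<Rightarrow> nat \<Rightarrow> real" where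
  "tracep k N xp c m = (if m = N then cellval k c 1 (xp 0) else cellval k c (m + 1) (xp m))"

definition jump :: "nat \<Rightarrow> nat \<Rightarrow> (nat \<Rightarrow> real) \<Rightarrow> (nat \<Rightarrow> nat \<Rightarrow> real) \<Rightarrow> nat \<Rightarrow> real" where
  "jump k N xp c m = tracep k N xp c m - tracem k xp c m"

definition avg :: "nat \<Rightarrow> nat \<Rightarrow> (nat \<Rightarrow> real) \<Rightarrow> (nat \<Rightarrow> nat \<Rightarrow> real) \<Rightarrow> nat \<Rightarrow> real" where
  "avg k N xp c m = (tracep k N xp c m + tracem k xp c m) / 2"

definition prv :: "nat \<Rightarrow> nat \<Rightarrow> nat" where
  "prv N j = (if j = 1 then N else j - 1)"

definition energy :: "nat \<Rightarrow> nat \<Rightarrow> (nat \<Rightarrow> real) \<Rightarrow> (real \<Rightarrow> real) \<Rightarrow> real \<Rightarrow> real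
    \<Rightarrow> (nat \<Rightarrow> nat \<Rightarrow> real) \<Rightarrow> (nat \<Rightarrow> nat \<Rightarrow> real) \<Rightarrow> (nat \<Rightarrow> nat \<Rightarrow> real) \<Rightarrow> real" where
  "energy k N xp V a11 a33 u v w =
     (\<Sum>j=1..N. integral {xp (j - 1)..xp j}
        (\<lambda>x. (cellval k v j x ^ 2 + cellval k w j x ^ 2) / 2 - V (cellval k u j x)))
     + (1/2) * (\<Sum>m=1..N. a11 * (jump k N xp u m) ^ 2 - a33 * (jump k N xp w m) ^ 2)"

end

theory Submission
  imports Defs
begin
definition dcell :: "nat \<Rightarrow> (nat \<Rightarrow> nat \<Rightarrow> real) \<Rightarrow> nat \<Rightarrow> real \<Rightarrow> real" where
  "dcell k c j x = (\<Sum>i\<le>k. c j i * (real i * x ^ (i - 1)))"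

lemma cellval_has_deriv_x: "((cellval k c j) has_real_derivative dcell k c j x) (at x within X)"
  unfolding cellval_def[abs_def] dcell_def
  by (auto intro!: derivative_eq_intros sum.cong simp: ac_simps)

lemma deriv_cellval: "deriv (cellval k c j) = dcell k c j"
  using cellval_has_deriv_x[where X=UNIV] DERIV_imp_deriv by blast

lemma cellval_has_deriv_t:
  assumes "\<forall>i\<le>k. ((\<lambda>s. c s j i) has_real_derivative c' j i) (at t within S)"
  shows "((\<lambda>s. cellval k (c s) j x) has_real_derivative cellval k c' j x) (at t within S)"
  unfolding cellval_def using assms
  by (auto intro!: derivative_eq_intros DERIV_sum DERIV_cmult_right)

lemma cont_fst: "continuous_on S f \<Longrightarrow> continuous_on (S \<times> X) (\<lambda>p. f (fst p))"
  by (rule continuous_on_compose2[of S f _ fst]) (auto intro: continuous_on_fst continuous_on_id)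

lemma cellval_cont2:
  assumes "\<forall>i\<le>k. continuous_on S (\<lambda>t. c t j i)"
  shows "continuous_on (S \<times> X) (\<lambda>p. cellval k (c (fst p)) j (snd p))"
  unfolding cellval_def using assms
  by (auto intro!: continuous_intros cont_fst)

lemma dcell_cont: "continuous_on X (dcell k c j)"
  unfolding dcell_def[abs_def] by (auto intro!: continuous_intros)

lemma cellval_cont: "continuous_on X (cellval k c j)"
  unfolding cellval_def[abs_def] by (auto intro!: continuous_intros)

lemma leib:
  fixes f fx :: "real \<Rightarrow> real \<Rightarrow> real"
  assumes "\<And>s y. s \<in> S \<Longrightarrow> y \<in> {a..b} \<Longrightarrow> ((\<lambda>s. f s y) has_real_derivative fx s y) (at s within S)"
    and "\<And>s. s \<in> S \<Longrightarrow> continuous_on {a..b} (f s)"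
    and "continuous_on (S \<times> {a..b}) (\<lambda>p. fx (fst p) (snd p))"
    and "t \<in> S" "convex S"
  shows "((\<lambda>s. integral {a..b} (f s)) has_real_derivative integral {a..b} (fx t)) (at t within S)"
proof -
  have "((\<lambda>s. integral (cbox a b) (f s)) has_real_derivative integral (cbox a b) (fx t)) (at t within S)"
    apply (rule leibniz_rule_field_derivative)
    using assms by (auto simp: case_prod_beta integrable_continuous_interval)
  then show ?thesis by simp
qed

lemma cont_of_deriv:
  assumes "\<And>t. t \<in> S \<Longrightarrow> (f has_real_derivative f' t) (at t within S)"
  shows "continuous_on S f"
  using assms continuous_on_eq_continuous_within DERIV_continuous by blast

lemma tr_deriv:
  assumes "m \<in> {1..N}" "\<forall>j\<in>{1..N}. \<forall>i\<le>k. ((\<lambda>s. c s j i) has_real_derivative c' j i) (at t within S)"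
  shows "((\<lambda>s. tracem k xp (c s) m) has_real_derivative tracem k xp c' m) (at t within S)"
    and "((\<lambda>s. tracep k N xp (c s) m) has_real_derivative tracep k N xp c' m) (at t within S)"
    and "((\<lambda>s. jump k N xp (c s) m) has_real_derivative jump k N xp c' m) (at t within S)"
    and "((\<lambda>s. avg k N xp (c s) m) has_real_derivative avg k N xp c' m) (at t within S)"
proof -
  show A: "((\<lambda>s. tracem k xp (c s) m) has_real_derivative tracem k xp c' m) (at t within S)"
    unfolding tracem_def using assms by (auto intro!: cellval_has_deriv_t)
  show B: "((\<lambda>s. tracep k N xp (c s) m) has_real_derivative tracep k N xp c' m) (at t within S)"
  proof (cases "m = N")
    case True
    then show ?thesis unfolding tracep_def using assms by (auto intro!: cellval_has_deriv_t)
  next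
    case False
    then have "m + 1 \<in> {1..N}" using assms by auto
    then show ?thesis unfolding tracep_def using assms False by (auto intro!: cellval_has_deriv_t)
  qed
  show "((\<lambda>s. jump k N xp (c s) m) has_real_derivative jump k N xp c' m) (at t within S)"
    unfolding jump_def by (intro DERIV_diff A B)
  show "((\<lambda>s. avg k N xp (c s) m) has_real_derivative avg k N xp c' m) (at t within S)"
    unfolding avg_def by (rule DERIV_cdivide, rule DERIV_add[OF B A])
qed

lemma prv_in: "j \<in> {1..N} \<Longrightarrow> prv N j \<in> {1..N}"
  by (auto simp: prv_def)

lemma sum_prv: "(\<Sum>j=1..N. g (prv N j)) = (\<Sum>j=1..N. (g j :: real))"
proof (rule sum.reindex_bij_betw)
  show "bij_betw (prv N) {1..N} {1..N}"
  proof (rule bij_betw_imageI)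
    show "inj_on (prv N) {1..N}" by (auto simp: inj_on_def prv_def split: if_splits)
    show "prv N ` {1..N} = {1..N}"
    proof
      show "prv N ` {1..N} \<subseteq> {1..N}" using prv_in by blast
      show "{1..N} \<subseteq> prv N ` {1..N}"
      proof
        fix x assume x: "x \<in> {1..N}"
        show "x \<in> prv N ` {1..N}"
        proof (cases "x = N")
          case True
          then show ?thesis using x by (intro image_eqI[of _ _ 1]) (auto simp: prv_def)
        next
          case False
          then show ?thesis using x by (intro image_eqI[of _ _ "x+1"]) (auto simp: prv_def)
        qed
      qed
    qed
  qed
qed

lemma left_end: "j \<in> {1..N} \<Longrightarrow> cellval k c j (xp (j - 1)) = tracep k N xp c (prv N j)"
  by (auto simp: tracep_def prv_def)

lemma ftc_cell:
  assumes "a \<le> b"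
  shows "integral {a..b} (\<lambda>x. cellval k c j x * dcell k d j x) + integral {a..b} (\<lambda>x. cellval k d j x * dcell k c j x)
    = cellval k c j b * cellval k d j b - cellval k c j a * cellval k d j a"
proof -
  have "((\<lambda>x. cellval k c j x * dcell k d j x + cellval k d j x * dcell k c j x) has_integral
     (cellval k c j b * cellval k d j b - cellval k c j a * cellval k d j a)) {a..b}"
  proof (rule fundamental_theorem_of_calculus[OF assms, where f="\<lambda>x. cellval k c j x * cellval k d j x"])
    fix x assume "x \<in> {a..b}"
    have "((\<lambda>x. cellval k c j x * cellval k d j x) has_real_derivative
       cellval k c j x * dcell k d j x + cellval k d j x * dcell k c j x) (at x within {a..b})"
      by (auto intro!: derivative_eq_intros cellval_has_deriv_x simp: ac_simps)
    then show "((\<lambda>x. cellval k c j x * cellval k d j x) has_vector_derivative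
       cellval k c j x * dcell k d j x + cellval k d j x * dcell k c j x) (at x within {a..b})"
      by (simp add: has_real_derivative_iff_has_vector_derivative)
  qed
  then have "integral {a..b} (\<lambda>x. cellval k c j x * dcell k d j x + cellval k d j x * dcell k c j x)
     = cellval k c j b * cellval k d j b - cellval k c j a * cellval k d j a"
    by (rule integral_unique)
  moreover have "integral {a..b} (\<lambda>x. cellval k c j x * dcell k d j x + cellval k d j x * dcell k c j x)
    = integral {a..b} (\<lambda>x. cellval k c j x * dcell k d j x) + integral {a..b} (\<lambda>x. cellval k d j x * dcell k c j x)"
    by (intro integral_add integrable_continuous_interval continuous_intros cellval_cont dcell_cont)
  ultimately show ?thesis by simp
qed

lemma cont_snd: "continuous_on UNIV g \<Longrightarrow> continuous_on (S \<times> X) (\<lambda>p. g (snd p))"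
  by (rule continuous_on_compose2[of UNIV g _ snd]) (auto intro: continuous_on_snd continuous_on_id)

theorem proposition4p1:
  fixes k N :: nat and xp :: "nat \<Rightarrow> real" and V :: "real \<Rightarrow> real"
    and a11 a13 a33 \<beta> T :: real
    and u v w u' v' w' :: "real \<Rightarrow> nat \<Rightarrow> nat \<Rightarrow> real"
  assumes N: "N \<ge> 1"
    and mesh: "\<forall>j<N. xp j < xp (j + 1)"
    and smooth: "\<forall>n x. (deriv ^^ n) V differentiable at x"
    and du: "\<forall>t\<in>{0..T}. \<forall>j\<in>{1..N}. \<forall>i\<le>k. ((\<lambda>s. u s j i) has_real_derivative u' t j i) (at t within {0..T})"
    and dv: "\<forall>t\<in>{0..T}. \<forall>j\<in>{1..N}. \<forall>i\<le>k. ((\<lambda>s. v s j i) has_real_derivative v' t j i) (at t within {0..T})"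
    and dw: "\<forall>t\<in>{0..T}. \<forall>j\<in>{1..N}. \<forall>i\<le>k. ((\<lambda>s. w s j i) has_real_derivative w' t j i) (at t within {0..T})"
    and cu: "\<forall>j\<in>{1..N}. \<forall>i\<le>k. continuous_on {0..T} (\<lambda>t. u' t j i)"
    and cv: "\<forall>j\<in>{1..N}. \<forall>i\<le>k. continuous_on {0..T} (\<lambda>t. v' t j i)"
    and cw: "\<forall>j\<in>{1..N}. \<forall>i\<le>k. continuous_on {0..T} (\<lambda>t. w' t j i)"
    and eq1: "\<forall>t\<in>{0..T}. \<forall>j\<in>{1..N}. \<forall>\<phi> :: nat \<Rightarrow> nat \<Rightarrow> real.
      (let what = (\<lambda>m. avg k N xp (w t) m + a11 * jump k N xp (u t) m
                        + a13 * jump k N xp (w t) m - \<beta> * jump k N xp (v' t) m) in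
       - integral {xp (j - 1)..xp j} (\<lambda>x. cellval k (v' t) j x * cellval k \<phi> j x)
       - integral {xp (j - 1)..xp j} (\<lambda>x. cellval k (w t) j x * deriv (cellval k \<phi> j) x)
       + what j * tracem k xp \<phi> j - what (prv N j) * tracep k N xp \<phi> (prv N j)
       = - integral {xp (j - 1)..xp j} (\<lambda>x. deriv V (cellval k (u t) j x) * cellval k \<phi> j x))"
    and eq2: "\<forall>t\<in>{0..T}. \<forall>j\<in>{1..N}. \<forall>\<phi> :: nat \<Rightarrow> nat \<Rightarrow> real.
      (let vhat = (\<lambda>m. \<beta> * jump k N xp (u' t) m) in
       integral {xp (j - 1)..xp j} (\<lambda>x. cellval k (u' t) j x * cellval k \<phi> j x)
       + vhat j * tracem k xp \<phi> j - vhat (prv N j) * tracep k N xp \<phi> (prv N j)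
       = integral {xp (j - 1)..xp j} (\<lambda>x. cellval k (v t) j x * cellval k \<phi> j x))"
    and eq3: "\<forall>t\<in>{0..T}. \<forall>j\<in>{1..N}. \<forall>\<phi> :: nat \<Rightarrow> nat \<Rightarrow> real.
      (let uhat = (\<lambda>m. avg k N xp (u t) m - a13 * jump k N xp (u t) m - a33 * jump k N xp (w t) m) in
       integral {xp (j - 1)..xp j} (\<lambda>x. cellval k (u t) j x * deriv (cellval k \<phi> j) x)
       - uhat j * tracem k xp \<phi> j + uhat (prv N j) * tracep k N xp \<phi> (prv N j)
       = - integral {xp (j - 1)..xp j} (\<lambda>x. cellval k (w t) j x * cellval k \<phi> j x))"
  shows "\<forall>t\<in>{0..T}. energy k N xp V a11 a33 (u t) (v t) (w t) = energy k N xp V a11 a33 (u 0) (v 0) (w 0)"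
proof (cases "T > 0")
  case False
  show ?thesis
  proof
    fix t assume "t \<in> {0..T}"
    then have "t = 0" using False by auto
    then show "energy k N xp V a11 a33 (u t) (v t) (w t) = energy k N xp V a11 a33 (u 0) (v 0) (w 0)" by simp
  qed
next
  case Tpos: True
  define S where "S = {0..T}"
  have convS: "convex S" by (simp add: S_def)
  have nbot: "at t within S \<noteq> bot" if "t \<in> S" for t
    using Tpos that by (simp add: S_def trivial_limit_within)
  have dV: "(V has_real_derivative deriv V y) (at y)" for y
  proof -
    have "(deriv ^^ 0) V differentiable at y" using smooth by blast
    then show ?thesis by (simp add: DERIV_deriv_iff_real_differentiable)
  qed
  have cV: "continuous_on UNIV V"
    by (meson DERIV_continuous continuous_at_imp_continuous_on dV)
  have cdV: "continuous_on UNIV (deriv V)"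
  proof -
    have "\<And>y. deriv V differentiable at y" 
    proof -
      fix y
      have "(deriv ^^ 1) V differentiable at y" using smooth by blast
      then show "deriv V differentiable at y" by simp
    qed
    then show ?thesis
      by (simp add: differentiable_at_imp_differentiable_on differentiable_imp_continuous_on)
  qed
  have Du: "\<forall>j\<in>{1..N}. \<forall>i\<le>k. ((\<lambda>s. u s j i) has_real_derivative u' t j i) (at t within S)"
    if "t \<in> S" for t using du that S_def by blast
  have Dv: "\<forall>j\<in>{1..N}. \<forall>i\<le>k. ((\<lambda>s. v s j i) has_real_derivative v' t j i) (at t within S)"
    if "t \<in> S" for t using dv that S_def by blast
  have Dw: "\<forall>j\<in>{1..N}. \<forall>i\<le>k. ((\<lambda>s. w s j i) has_real_derivative w' t j i) (at t within S)"
    if "t \<in> S" for t using dw that S_def by blast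
  have Cu: "\<forall>i\<le>k. continuous_on S (\<lambda>s. u s j i)" if "j \<in> {1..N}" for j
    proof (intro allI impI)
    fix i assume "i \<le> k"
    show "continuous_on S (\<lambda>s. u s j i)"
      by (rule cont_of_deriv[where f'="\<lambda>t. u' t j i"]) (use Du that \<open>i \<le> k\<close> in blast)
  qed
  have Cv: "\<forall>i\<le>k. continuous_on S (\<lambda>s. v s j i)" if "j \<in> {1..N}" for j
    proof (intro allI impI)
    fix i assume "i \<le> k"
    show "continuous_on S (\<lambda>s. v s j i)"
      by (rule cont_of_deriv[where f'="\<lambda>t. v' t j i"]) (use Dv that \<open>i \<le> k\<close> in blast)
  qed
  have Cw: "\<forall>i\<le>k. continuous_on S (\<lambda>s. w s j i)" if "j \<in> {1..N}" for j
    proof (intro allI impI)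
    fix i assume "i \<le> k"
    show "continuous_on S (\<lambda>s. w s j i)"
      by (rule cont_of_deriv[where f'="\<lambda>t. w' t j i"]) (use Dw that \<open>i \<le> k\<close> in blast)
  qed
  have Cu': "\<forall>i\<le>k. continuous_on S (\<lambda>s. u' s j i)" if "j \<in> {1..N}" for j
    using cu that S_def by blast
  have Cv': "\<forall>i\<le>k. continuous_on S (\<lambda>s. v' s j i)" if "j \<in> {1..N}" for j
    using cv that S_def by blast
  have Cw': "\<forall>i\<le>k. continuous_on S (\<lambda>s. w' s j i)" if "j \<in> {1..N}" for j
    using cw that S_def by blast
  have cell: "xp (j - 1) \<le> xp j" if "j \<in> {1..N}" for j
  proof -
    have "j - 1 < N" "j - 1 + 1 = j" using that by auto
    then show ?thesis using mesh by (metis less_imp_le)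
  qed
  have key: "((\<lambda>s. energy k N xp V a11 a33 (u s) (v s) (w s)) has_real_derivative 0) (at t within S)"
    if t: "t \<in> S" for t
  proof -
    define E' where "E' = (\<Sum>j=1..N. integral {xp (j - 1)..xp j} (\<lambda>x.
          cellval k (v t) j x * cellval k (v' t) j x + cellval k (w t) j x * cellval k (w' t) j x
          - deriv V (cellval k (u t) j x) * cellval k (u' t) j x))
       + (1/2) * (\<Sum>m=1..N. a11 * (2 * jump k N xp (u t) m * jump k N xp (u' t) m)
                         - a33 * (2 * jump k N xp (w t) m * jump k N xp (w' t) m))"
    have dE: "((\<lambda>s. energy k N xp V a11 a33 (u s) (v s) (w s)) has_real_derivative E') (at t within S)"
    proof -
      have 1: "((\<lambda>s. \<Sum>j=1..N. integral {xp (j - 1)..xp j}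
        (\<lambda>x. (cellval k (v s) j x ^ 2 + cellval k (w s) j x ^ 2) / 2 - V (cellval k (u s) j x)))
        has_real_derivative (\<Sum>j=1..N. integral {xp (j - 1)..xp j} (\<lambda>x.
          cellval k (v t) j x * cellval k (v' t) j x + cellval k (w t) j x * cellval k (w' t) j x
          - deriv V (cellval k (u t) j x) * cellval k (u' t) j x))) (at t within S)"
      proof (rule DERIV_sum)
        fix j :: nat assume j: "j \<in> {1..N}"
        show "((\<lambda>s. integral {xp (j - 1)..xp j}
          (\<lambda>x. (cellval k (v s) j x ^ 2 + cellval k (w s) j x ^ 2) / 2 - V (cellval k (u s) j x)))
          has_real_derivative integral {xp (j - 1)..xp j} (\<lambda>x.
          cellval k (v t) j x * cellval k (v' t) j x + cellval k (w t) j x * cellval k (w' t) j x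
          - deriv V (cellval k (u t) j x) * cellval k (u' t) j x)) (at t within S)"
        proof (rule leib[OF _ _ _ t convS])
          fix s y assume s: "s \<in> S"
          have hu: "((\<lambda>s. cellval k (u s) j y) has_real_derivative cellval k (u' s) j y) (at s within S)"
            using Du[OF s] j by (intro cellval_has_deriv_t) blast
          have hv: "((\<lambda>s. cellval k (v s) j y) has_real_derivative cellval k (v' s) j y) (at s within S)"
            using Dv[OF s] j by (intro cellval_has_deriv_t) blast
          have hw: "((\<lambda>s. cellval k (w s) j y) has_real_derivative cellval k (w' s) j y) (at s within S)"
            using Dw[OF s] j by (intro cellval_has_deriv_t) blast
          show "((\<lambda>s. (cellval k (v s) j y ^ 2 + cellval k (w s) j y ^ 2) / 2 - V (cellval k (u s) j y))
            has_real_derivative cellval k (v s) j y * cellval k (v' s) j y + cellval k (w s) j y * cellval k (w' s) j y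
          - deriv V (cellval k (u s) j y) * cellval k (u' s) j y) (at s within S)"
            by (auto intro!: derivative_eq_intros hu hv hw DERIV_chain2[OF dV])
        next
          fix s assume s: "s \<in> S"
          show "continuous_on {xp (j - 1)..xp j}
            (\<lambda>x. (cellval k (v s) j x ^ 2 + cellval k (w s) j x ^ 2) / 2 - V (cellval k (u s) j x))"
            by (intro continuous_intros cellval_cont continuous_on_compose2[OF cV cellval_cont]) auto
        next
          have c1: "continuous_on (S \<times> {xp (j - 1)..xp j}) (\<lambda>p. cellval k (u (fst p)) j (snd p))"
            using Cu[OF j] by (rule cellval_cont2)
          have c2: "continuous_on (S \<times> {xp (j - 1)..xp j}) (\<lambda>p. cellval k (v (fst p)) j (snd p))"
            using Cv[OF j] by (rule cellval_cont2)
          have c3: "continuous_on (S \<times> {xp (j - 1)..xp j}) (\<lambda>p. cellval k (w (fst p)) j (snd p))"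
            using Cw[OF j] by (rule cellval_cont2)
          have c4: "continuous_on (S \<times> {xp (j - 1)..xp j}) (\<lambda>p. cellval k (u' (fst p)) j (snd p))"
            using Cu'[OF j] by (rule cellval_cont2)
          have c5: "continuous_on (S \<times> {xp (j - 1)..xp j}) (\<lambda>p. cellval k (v' (fst p)) j (snd p))"
            using Cv'[OF j] by (rule cellval_cont2)
          have c6: "continuous_on (S \<times> {xp (j - 1)..xp j}) (\<lambda>p. cellval k (w' (fst p)) j (snd p))"
            using Cw'[OF j] by (rule cellval_cont2)
          have c7: "continuous_on (S \<times> {xp (j - 1)..xp j}) (\<lambda>p. deriv V (cellval k (u (fst p)) j (snd p)))"
            using continuous_on_compose2[OF cdV c1] by simp
          show "continuous_on (S \<times> {xp (j - 1)..xp j}) (\<lambda>p. 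
            cellval k (v (fst p)) j (snd p) * cellval k (v' (fst p)) j (snd p) + cellval k (w (fst p)) j (snd p) * cellval k (w' (fst p)) j (snd p)
          - deriv V (cellval k (u (fst p)) j (snd p)) * cellval k (u' (fst p)) j (snd p))"
            by (intro continuous_on_add continuous_on_diff continuous_on_mult c1 c2 c3 c4 c5 c6 c7)
        qed
      qed
      have 2: "((\<lambda>s. (1/2) * (\<Sum>m=1..N. a11 * (jump k N xp (u s) m) ^ 2 - a33 * (jump k N xp (w s) m) ^ 2))
         has_real_derivative (1/2) * (\<Sum>m=1..N. a11 * (2 * jump k N xp (u t) m * jump k N xp (u' t) m)
                         - a33 * (2 * jump k N xp (w t) m * jump k N xp (w' t) m))) (at t within S)"
      proof (intro DERIV_cmult DERIV_sum)
        fix m :: nat assume m: "m \<in> {1..N}"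
        have ju: "((\<lambda>s. jump k N xp (u s) m) has_real_derivative jump k N xp (u' t) m) (at t within S)"
          by (rule tr_deriv(3)[OF m Du[OF t]])
        have jw: "((\<lambda>s. jump k N xp (w s) m) has_real_derivative jump k N xp (w' t) m) (at t within S)"
          by (rule tr_deriv(3)[OF m Dw[OF t]])
        show "((\<lambda>s. a11 * (jump k N xp (u s) m) ^ 2 - a33 * (jump k N xp (w s) m) ^ 2) has_real_derivative
           a11 * (2 * jump k N xp (u t) m * jump k N xp (u' t) m)
                         - a33 * (2 * jump k N xp (w t) m * jump k N xp (w' t) m)) (at t within S)"
          by (auto intro!: derivative_eq_intros ju jw)
      qed
      show ?thesis unfolding energy_def E'_def by (rule DERIV_add[OF 1 2])
    qed
    have "E' = 0"
    proof -
      define what where "what m = avg k N xp (w t) m + a11 * jump k N xp (u t) m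
                        + a13 * jump k N xp (w t) m - \<beta> * jump k N xp (v' t) m" for m
      define vhat where "vhat m = \<beta> * jump k N xp (u' t) m" for m
      define uh' where "uh' m = avg k N xp (u' t) m - a13 * jump k N xp (u' t) m - a33 * jump k N xp (w' t) m" for m
      define X where "X m = vhat m * tracem k xp (v' t) m + uh' m * tracem k xp (w t) m
          + what m * tracem k xp (u' t) m - tracem k xp (u' t) m * tracem k xp (w t) m" for m
      define Y where "Y m = vhat m * tracep k N xp (v' t) m + uh' m * tracep k N xp (w t) m
          + what m * tracep k N xp (u' t) m - tracep k N xp (u' t) m * tracep k N xp (w t) m" for m
      have tT: "t \<in> {0..T}" using t S_def by simp
      have cellj: "integral {xp (j - 1)..xp j} (\<lambda>x.
          cellval k (v t) j x * cellval k (v' t) j x + cellval k (w t) j x * cellval k (w' t) j x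
          - deriv V (cellval k (u t) j x) * cellval k (u' t) j x) = X j - Y (prv N j)"
        if j: "j \<in> {1..N}" for j
      proof -
        let ?I = "\<lambda>f. integral {xp (j - 1)..xp j} f"
        have e1: "- ?I (\<lambda>x. cellval k (v' t) j x * cellval k (u' t) j x)
           - ?I (\<lambda>x. cellval k (w t) j x * dcell k (u' t) j x)
           + what j * tracem k xp (u' t) j - what (prv N j) * tracep k N xp (u' t) (prv N j)
           = - ?I (\<lambda>x. deriv V (cellval k (u t) j x) * cellval k (u' t) j x)"
          using eq1[rule_format, OF tT j, of "u' t"] unfolding Let_def deriv_cellval what_def .
        have e2: "?I (\<lambda>x. cellval k (u' t) j x * cellval k (v' t) j x)
           + vhat j * tracem k xp (v' t) j - vhat (prv N j) * tracep k N xp (v' t) (prv N j)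
           = ?I (\<lambda>x. cellval k (v t) j x * cellval k (v' t) j x)"
          using eq2[rule_format, OF tT j, of "v' t"] unfolding Let_def vhat_def .
        have e3: "?I (\<lambda>x. cellval k (u' t) j x * dcell k (w t) j x)
           - uh' j * tracem k xp (w t) j + uh' (prv N j) * tracep k N xp (w t) (prv N j)
           = - ?I (\<lambda>x. cellval k (w' t) j x * cellval k (w t) j x)"
        proof -
          define uh where "uh s m = avg k N xp (u s) m - a13 * jump k N xp (u s) m - a33 * jump k N xp (w s) m" for s m
          define G where "G s = ?I (\<lambda>x. cellval k (u s) j x * dcell k (w t) j x)
            - uh s j * tracem k xp (w t) j + uh s (prv N j) * tracep k N xp (w t) (prv N j)
            + ?I (\<lambda>x. cellval k (w s) j x * cellval k (w t) j x)" for s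
          define G' where "G' = ?I (\<lambda>x. cellval k (u' t) j x * dcell k (w t) j x)
            - uh' j * tracem k xp (w t) j + uh' (prv N j) * tracep k N xp (w t) (prv N j)
            + ?I (\<lambda>x. cellval k (w' t) j x * cellval k (w t) j x)"
          have G0: "G s = 0" if s: "s \<in> S" for s
          proof -
            have sT: "s \<in> {0..T}" using s S_def by simp
            show ?thesis
              using eq3[rule_format, OF sT j, of "w t"] unfolding Let_def deriv_cellval G_def uh_def by linarith
          qed
          have pj: "prv N j \<in> {1..N}" using prv_in[OF j] .
          have duh: "((\<lambda>s. uh s m) has_real_derivative uh' m) (at t within S)" if m: "m \<in> {1..N}" for m
            unfolding uh_def uh'_def
            by (intro DERIV_diff DERIV_cmult tr_deriv(3,4)[OF m Du[OF t]] tr_deriv(3)[OF m Dw[OF t]])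
          have ccu: "continuous_on (S \<times> {xp (j - 1)..xp j}) (\<lambda>p. cellval k (u' (fst p)) j (snd p))"
            using Cu'[OF j] by (rule cellval_cont2)
          have ccw: "continuous_on (S \<times> {xp (j - 1)..xp j}) (\<lambda>p. cellval k (w' (fst p)) j (snd p))"
            using Cw'[OF j] by (rule cellval_cont2)
          have L1: "((\<lambda>s. ?I (\<lambda>x. cellval k (u s) j x * dcell k (w t) j x)) has_real_derivative
                 ?I (\<lambda>x. cellval k (u' t) j x * dcell k (w t) j x)) (at t within S)"
          proof (rule leib[where fx="\<lambda>s x. cellval k (u' s) j x * dcell k (w t) j x", OF _ _ _ t convS])
            fix s y assume s: "s \<in> S"
            show "((\<lambda>s. cellval k (u s) j y * dcell k (w t) j y) has_real_derivative cellval k (u' s) j y * dcell k (w t) j y) (at s within S)"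
              using Du[OF s] j by (intro DERIV_cmult_right cellval_has_deriv_t) blast
          next
            fix s show "continuous_on {xp (j - 1)..xp j} (\<lambda>x. cellval k (u s) j x * dcell k (w t) j x)"
              by (intro continuous_intros cellval_cont dcell_cont)
          next
            show "continuous_on (S \<times> {xp (j - 1)..xp j}) (\<lambda>p. cellval k (u' (fst p)) j (snd p) * dcell k (w t) j (snd p))"
              by (intro continuous_on_mult ccu cont_snd dcell_cont)
          qed
          have L2: "((\<lambda>s. ?I (\<lambda>x. cellval k (w s) j x * cellval k (w t) j x)) has_real_derivative
                 ?I (\<lambda>x. cellval k (w' t) j x * cellval k (w t) j x)) (at t within S)"
          proof (rule leib[where fx="\<lambda>s x. cellval k (w' s) j x * cellval k (w t) j x", OF _ _ _ t convS])
            fix s y assume s: "s \<in> S"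
            show "((\<lambda>s. cellval k (w s) j y * cellval k (w t) j y) has_real_derivative cellval k (w' s) j y * cellval k (w t) j y) (at s within S)"
              using Dw[OF s] j by (intro DERIV_cmult_right cellval_has_deriv_t) blast
          next
            fix s show "continuous_on {xp (j - 1)..xp j} (\<lambda>x. cellval k (w s) j x * cellval k (w t) j x)"
              by (intro continuous_intros cellval_cont)
          next
            show "continuous_on (S \<times> {xp (j - 1)..xp j}) (\<lambda>p. cellval k (w' (fst p)) j (snd p) * cellval k (w t) j (snd p))"
              by (intro continuous_on_mult ccw cont_snd cellval_cont)
          qed
          have dG: "(G has_real_derivative G') (at t within S)"
            unfolding G_def[abs_def] G'_def
            by (intro DERIV_add DERIV_diff L1 L2 DERIV_cmult_right duh j pj)
          have "((\<lambda>s. 0) has_real_derivative G') (at t within S)"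
            by (rule has_field_derivative_transform_within[OF dG zero_less_one t]) (simp add: G0)
          then have "G' = 0"
            using has_field_derivative_unique[OF _ DERIV_const nbot[OF t]] by blast
          then show ?thesis unfolding G'_def by linarith
        qed
        have ftc: "?I (\<lambda>x. cellval k (w t) j x * dcell k (u' t) j x) + ?I (\<lambda>x. cellval k (u' t) j x * dcell k (w t) j x)
          = tracem k xp (u' t) j * tracem k xp (w t) j - tracep k N xp (u' t) (prv N j) * tracep k N xp (w t) (prv N j)"
          using ftc_cell[OF cell[OF j], of k "w t" j "u' t"] left_end[OF j] unfolding tracem_def by (simp add: ac_simps)
        have comm: "?I (\<lambda>x. cellval k (u' t) j x * cellval k (v' t) j x) = ?I (\<lambda>x. cellval k (v' t) j x * cellval k (u' t) j x)"
          by (simp add: mult.commute)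
        have comm2: "?I (\<lambda>x. cellval k (w t) j x * cellval k (w' t) j x) = ?I (\<lambda>x. cellval k (w' t) j x * cellval k (w t) j x)"
          by (simp add: mult.commute)
        have cdVu: "continuous_on {xp (j - 1)..xp j} (\<lambda>x. deriv V (cellval k (u t) j x))"
          by (rule continuous_on_compose2[OF cdV cellval_cont]) auto
        have split: "?I (\<lambda>x.
          cellval k (v t) j x * cellval k (v' t) j x + cellval k (w t) j x * cellval k (w' t) j x
          - deriv V (cellval k (u t) j x) * cellval k (u' t) j x)
          = ?I (\<lambda>x. cellval k (v t) j x * cellval k (v' t) j x) + ?I (\<lambda>x. cellval k (w t) j x * cellval k (w' t) j x)
           - ?I (\<lambda>x. deriv V (cellval k (u t) j x) * cellval k (u' t) j x)"
          by (subst integral_diff, (intro integrable_continuous_interval continuous_intros cellval_cont cdVu)+,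
              subst integral_add, (intro integrable_continuous_interval continuous_intros cellval_cont cdVu)+, simp)
        show ?thesis
          unfolding split comm2 X_def Y_def using e1 e2 e3 ftc comm by linarith
      qed
      have "(\<Sum>j=1..N. integral {xp (j - 1)..xp j} (\<lambda>x.
          cellval k (v t) j x * cellval k (v' t) j x + cellval k (w t) j x * cellval k (w' t) j x
          - deriv V (cellval k (u t) j x) * cellval k (u' t) j x)) = (\<Sum>j=1..N. X j - Y (prv N j))"
        using cellj by (rule sum.cong[OF refl])
      also have "\<dots> = (\<Sum>m=1..N. X m - Y m)"
        by (simp only: sum_subtractf sum_prv)
      finally have s1: "(\<Sum>j=1..N. integral {xp (j - 1)..xp j} (\<lambda>x.
          cellval k (v t) j x * cellval k (v' t) j x + cellval k (w t) j x * cellval k (w' t) j x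
          - deriv V (cellval k (u t) j x) * cellval k (u' t) j x)) = (\<Sum>m=1..N. X m - Y m)" .
      have pt: "X m - Y m + (1/2) * (a11 * (2 * jump k N xp (u t) m * jump k N xp (u' t) m)
                         - a33 * (2 * jump k N xp (w t) m * jump k N xp (w' t) m)) = 0" for m
        unfolding X_def Y_def what_def vhat_def uh'_def jump_def avg_def by (simp add: field_simps)
      have "E' = (\<Sum>m=1..N. X m - Y m + (1/2) * (a11 * (2 * jump k N xp (u t) m * jump k N xp (u' t) m)
                         - a33 * (2 * jump k N xp (w t) m * jump k N xp (w' t) m)))"
        unfolding E'_def s1 by (simp add: sum.distrib sum_distrib_left)
      also have "\<dots> = 0" using pt by simp
      finally show ?thesis .
    qed
    then show ?thesis using dE by simp
  qed
  obtain c where "\<forall>x\<in>S. energy k N xp V a11 a33 (u x) (v x) (w x) = c"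
    using has_field_derivative_zero_constant[OF convS key] by blast
  moreover have "0 \<in> S" using Tpos by (simp add: S_def)
  ultimately show ?thesis by (simp add: S_def)
qed

end
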